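(* Given $x_0\in[0,1]$, there is an infinite-dimensional vector subspace $S$ of $C^0([0,1])$ such that every $F$ in the closure of $S$ in $C([0,1])$ with respect to the supremum norm satisfies: (1) $F$ is a primitive of a Kurzweil integrable function, i.e. there is a Kurzweil integrable $f$ on $[0,1]$ with $F(x)-F(0)=\int_0^x f$ for all $x\in[0,1]$; and (2) $F$ is differentiable at every point of $[0,1]$ except possibly at $x_0$.
   Context: $C^0([0,1])$ denotes the set of everywhere differentiable real functions on $[0,1]$; $C([0,1])$ is the Banach space of continuous real functions on $[0,1]$ with the supremum norm. Kurzweil integral means the Henstock–Kurzweil integral. *)

theory Defs
  imports "HOL-Analysis.Analysis"
begin

text \<open>Functions on [0,1] are represented as real \<Rightarrow> real; only values on {0..1} matter.\<close>

definition C0_01 :: "(real \<Rightarrow> real) set" where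
  "C0_01 = {F. \<forall>x\<in>{0..1}. F differentiable (at x within {0..1})}"

definition lin_subspace :: "(real \<Rightarrow> real) set \<Rightarrow> bool" where
  "lin_subspace S \<longleftrightarrow> (\<lambda>x. 0) \<in> S \<and> (\<forall>F\<in>S. \<forall>G\<in>S. (\<lambda>x. F x + G x) \<in> S)
     \<and> (\<forall>c::real. \<forall>F\<in>S. (\<lambda>x. c * F x) \<in> S)"

definition inf_dim_01 :: "(real \<Rightarrow> real) set \<Rightarrow> bool" where
  "inf_dim_01 S \<longleftrightarrow> (\<forall>n::nat. \<exists>Fs::nat \<Rightarrow> real \<Rightarrow> real. (\<forall>i<n. Fs i \<in> S) \<and>
     (\<forall>c::nat \<Rightarrow> real. (\<forall>x\<in>{0..1}. (\<Sum>i<n. c i * Fs i x) = 0) \<longrightarrow> (\<forall>i<n. c i = 0)))"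

definition sup_closure_01 :: "(real \<Rightarrow> real) set \<Rightarrow> (real \<Rightarrow> real) set" where
  "sup_closure_01 S = {F. continuous_on {0..1} F \<and>
     (\<forall>e>0. \<exists>G\<in>S. \<forall>x\<in>{0..1}. \<bar>F x - G x\<bar> \<le> e)}"

definition kurzweil_primitive_01 :: "(real \<Rightarrow> real) \<Rightarrow> bool" where
  "kurzweil_primitive_01 F \<longleftrightarrow> (\<exists>f::real \<Rightarrow> real. f integrable_on {0..1} \<and>
     (\<forall>x\<in>{0..1}. (f has_integral (F x - F 0)) {0..x}))"

end

theory Submission
  imports Defs
begin

lemma vabs_deriv: "((\<lambda>v::real. v * \<bar>v\<bar>) has_real_derivative 2 * \<bar>v\<bar>) (at v)"
proof (cases "v = 0")
  case True
  have "((\<lambda>h::real. ((0 + h) * \<bar>0 + h\<bar> - 0 * \<bar>0\<bar>) / h) \<longlongrightarrow> 0) (at 0)"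
  proof -
    have "((\<lambda>h::real. \<bar>h\<bar>) \<longlongrightarrow> \<bar>0\<bar>) (at 0)"
      by (intro tendsto_intros)
    then have "((\<lambda>h::real. \<bar>h\<bar>) \<longlongrightarrow> 0) (at 0)" by simp
    then show ?thesis
      by (rule Lim_transform_within[where d=1]) auto
  qed
  then show ?thesis using True by (simp add: DERIV_def)
next
  case False
  show ?thesis
  proof (cases "v > 0")
    case True
    have d: "((\<lambda>v::real. v * v) has_real_derivative 2 * v) (at v)"
      by (auto intro!: derivative_eq_intros)
    show ?thesis
      by (rule has_field_derivative_transform_within_open[OF _ open_greaterThan[of 0]])
         (use d True in auto)
  next
    case f: False
    with False have "v < 0" by auto
    have d: "((\<lambda>v::real. - (v * v)) has_real_derivative 2 * \<bar>v\<bar>) (at v)"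
      using \<open>v<0\<close> by (auto intro!: derivative_eq_intros)
    show ?thesis
      by (rule has_field_derivative_transform_within_open[OF d open_lessThan[of 0]])
         (use \<open>v<0\<close> in auto)
  qed
qed

definition Q :: "real \<Rightarrow> real" where "Q v = (v * v + v * \<bar>v\<bar>) / 2"

lemma Q_deriv: "(Q has_real_derivative (v + \<bar>v\<bar>)) (at v)"
proof -
  have 1: "((\<lambda>v::real. v * v) has_real_derivative 2 * v) (at v)" by (auto intro!: derivative_eq_intros)
  have "((\<lambda>v. (v * v + v * \<bar>v\<bar>) / 2) has_real_derivative ((2 * v + 2 * abs v) / 2)) (at v)"
    using DERIV_cdivide[OF DERIV_add[OF 1 vabs_deriv], of 2] by simp
  moreover have e: "(2 * v + 2 * abs v) / 2 = v + abs v" by simp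
  ultimately show ?thesis unfolding Q_def[abs_def] by metis
qed

lemma Q_nonzero: "Q v \<noteq> 0 \<Longrightarrow> v > 0"
  unfolding Q_def by (cases "v > 0"; cases "v < 0") (auto simp: abs_if)

lemma Q_pos: "v > 0 \<Longrightarrow> Q v > 0"
  unfolding Q_def by auto

definition sg :: "real \<Rightarrow> real" where "sg x0 = (if x0 \<le> 1/2 then 1 else -1)"
definition uu :: "real \<Rightarrow> real \<Rightarrow> real" where "uu x0 x = sg x0 * (x - x0)"
definition aa :: "nat \<Rightarrow> real" where "aa n = 1 / 2 ^ (n + 2)"
definition gg :: "nat \<Rightarrow> real \<Rightarrow> real" where "gg n t = (t - aa n) * (2 * aa n - t)"
definition kk :: "nat \<Rightarrow> real" where "kk n = Q (gg n (3/2 * aa n))"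
definition psi :: "real \<Rightarrow> nat \<Rightarrow> real \<Rightarrow> real" where
  "psi x0 n x = Q (gg n (uu x0 x)) / kk n"
definition pt :: "real \<Rightarrow> nat \<Rightarrow> real" where "pt x0 n = x0 + sg x0 * (3/2 * aa n)"

lemma sg_sq: "sg x0 * sg x0 = 1" by (simp add: sg_def)
lemma abs_sg: "\<bar>sg x0\<bar> = 1" by (simp add: sg_def)

lemma uu_pt: "uu x0 (pt x0 n) = 3/2 * aa n"
  by (simp add: uu_def pt_def sg_def)

lemma uu_dist: "\<bar>uu x0 y - uu x0 x\<bar> = \<bar>y - x\<bar>"
  by (simp add: uu_def sg_def algebra_simps abs_minus_commute)

lemma aa_pos: "aa n > 0" by (simp add: aa_def)
lemma aa_le: "aa n \<le> 1/4"
proof -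
  have "(4::real) \<le> 2 ^ (n+2)"
    using power_increasing[of 2 "n+2" "2::real"] by simp
  then show ?thesis by (simp add: aa_def field_simps)
qed

lemma aa_lt2: "m < n \<Longrightarrow> 2 * aa n \<le> aa m"
proof -
  assume "m < n"
  then have "(2::real) ^ (m+3) \<le> 2 ^ (n+2)" by (intro power_increasing) auto
  then show ?thesis by (simp add: aa_def field_simps power_add)
qed

lemma aa_anti: "m \<le> n \<Longrightarrow> aa n \<le> aa m"
proof -
  assume "m \<le> n"
  then have "(2::real) ^ (m+2) \<le> 2 ^ (n+2)" by (intro power_increasing) auto
  then show ?thesis by (simp add: aa_def field_simps)
qed

lemma kk_pos: "kk n > 0"
  unfolding kk_def gg_def using aa_pos[of n] by (intro Q_pos) (auto intro!: mult_pos_pos)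

lemma psi_nz: "psi x0 n x \<noteq> 0 \<Longrightarrow> aa n < uu x0 x \<and> uu x0 x < 2 * aa n"
proof -
  assume "psi x0 n x \<noteq> 0"
  then have "gg n (uu x0 x) > 0" unfolding psi_def using Q_nonzero by fastforce
  then have "(uu x0 x - aa n) * (2 * aa n - uu x0 x) > 0" by (simp add: gg_def)
  then show ?thesis using aa_pos[of n] by (auto simp: zero_less_mult_iff)
qed

lemma psi_pt: "psi x0 m (pt x0 n) = (if m = n then 1 else 0)"
proof (cases "m = n")
  case True then show ?thesis using kk_pos[of n] by (simp add: psi_def uu_pt kk_def)
next
  case False
  have "psi x0 m (pt x0 n) = 0"
  proof (rule ccontr)
    assume "psi x0 m (pt x0 n) \<noteq> 0"
    from psi_nz[OF this] have h: "aa m < 3/2 * aa n" "3/2 * aa n < 2 * aa m" by (auto simp: uu_pt)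
    show False
    proof (cases "m < n")
      case True then show False using aa_lt2[OF True] h aa_pos[of n] by auto
    next
      case f: False then have "n < m" using False by auto
      then show False using aa_lt2[of n m] h aa_pos[of n] by auto
    qed
  qed
  then show ?thesis using False by simp
qed

lemma pt_in: "x0 \<in> {0..1} \<Longrightarrow> pt x0 n \<in> {0..1}"
  using aa_le[of n] aa_pos[of n] by (auto simp: pt_def sg_def)

lemma psi_has_deriv: "\<exists>D. (psi x0 n has_real_derivative D) (at x)"
proof -
  have "((\<lambda>x. Q (gg n (uu x0 x))) has_real_derivative
          (gg n (uu x0 x) + \<bar>gg n (uu x0 x)\<bar>) * ((2 * aa n - uu x0 x) * sg x0 - (uu x0 x - aa n) * sg x0)) (at x)"
    unfolding gg_def uu_def
    by (rule DERIV_chain2[OF Q_deriv]) (auto intro!: derivative_eq_intros)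
  then show ?thesis unfolding psi_def by (auto intro: DERIV_cdivide)
qed

lemma psi_diff: "psi x0 n differentiable (at x)"
  using psi_has_deriv[of x0 n x] real_differentiable_def by (metis differentiableI)

lemma loc: "x \<noteq> x0 \<Longrightarrow> \<exists>M d. d > 0 \<and> (\<forall>y. dist y x < d \<longrightarrow> (\<forall>n\<ge>M. psi x0 n y = 0))"
proof -
  assume "x \<noteq> x0"
  then have t0: "uu x0 x \<noteq> 0" by (simp add: uu_def sg_def)
  show ?thesis
  proof (cases "uu x0 x < 0")
    case True
    show ?thesis
    proof (intro exI conjI allI impI)
      show "- uu x0 x > 0" using True by simp
      fix y n assume "dist y x < - uu x0 x"
      then have "uu x0 y < 0" using uu_dist[of x0 y x] by (auto simp: dist_real_def)
      then show "psi x0 n y = 0" using psi_nz[of x0 n y] aa_pos[of n] by force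
    qed
  next
    case False
    then have tp: "uu x0 x > 0" using t0 by simp
    obtain M where M: "(1/2::real) ^ M < uu x0 x / 4"
      using real_arch_pow_inv[of "uu x0 x / 4" "1/2::real"] tp by auto
    have aM: "2 * aa M < uu x0 x / 2"
    proof -
      have "aa M = (1/2)^M / 4" by (simp add: aa_def power_add power_divide)
      then show ?thesis using M tp by linarith
    qed
    show ?thesis
    proof (intro exI conjI allI impI)
      show "uu x0 x / 2 > 0" using tp by simp
      fix y n assume y: "dist y x < uu x0 x / 2" and n: "M \<le> n"
      then have "\<bar>uu x0 y - uu x0 x\<bar> < uu x0 x / 2" using uu_dist[of x0 y x] by (simp add: dist_real_def)
      then have "uu x0 y > uu x0 x / 2" by (auto simp only: abs_less_iff)
      then have "uu x0 y > 2 * aa n" using aM aa_anti[OF n] by simp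
      then show "psi x0 n y = 0" using psi_nz[of x0 n y] by force
    qed
  qed
qed


definition SS :: "real \<Rightarrow> (real \<Rightarrow> real) set" where
  "SS x0 = {(\<lambda>x. \<Sum>n<N. c n * psi x0 n x) | N c. True}"

lemma sum_trunc: "(M::nat) \<le> K \<Longrightarrow> (\<forall>n\<ge>M. h n = 0) \<Longrightarrow> sum h {..<K} = sum h {..<M}"
  by (rule sum.mono_neutral_right) auto

lemma S_eval: "(\<Sum>n<N. c n * psi x0 n (pt x0 j)) = (if j < N then c j else 0)"
  by (simp add: psi_pt if_distrib[of "(*) _"] cong: if_cong)

lemma pad: "(\<Sum>n<N. c n * psi x0 n y) = (\<Sum>n<max N M. (if n < N then c n else 0) * psi x0 n y)"
proof -
  have "(\<Sum>n<max N M. (if n < N then c n else 0) * psi x0 n y) = (\<Sum>n<N. (if n < N then c n else 0) * psi x0 n y)"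
    by (rule sum_trunc) auto
  also have "\<dots> = (\<Sum>n<N. c n * psi x0 n y)" by (rule sum.cong) auto
  finally show ?thesis by simp
qed

lemma zero_by_eps:
  fixes A K :: real
  assumes "K \<ge> 0" "\<forall>e>0. \<bar>A\<bar> \<le> e * (1 + K)"
  shows "A = 0"
proof (rule ccontr)
  assume "A \<noteq> 0"
  then have "\<bar>A\<bar> / (2 * (1 + K)) > 0" using assms(1) by auto
  with assms(2) have "\<bar>A\<bar> \<le> \<bar>A\<bar> / (2 * (1 + K)) * (1 + K)" by blast
  also have "\<dots> = \<bar>A\<bar> / 2" using assms(1) by (simp add: field_simps)
  finally show False using \<open>A \<noteq> 0\<close> by simp
qed

lemma closure_repr:
  assumes x0: "x0 \<in> {0..1}" and F: "F \<in> sup_closure_01 (SS x0)" and y: "y \<in> {0..1}"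
    and M: "\<forall>n\<ge>M. psi x0 n y = 0"
  shows "F y = (\<Sum>n<M. F (pt x0 n) * psi x0 n y)"
proof -
  define K where "K = (\<Sum>n<M. \<bar>psi x0 n y\<bar>)"
  have K0: "K \<ge> 0" unfolding K_def by (intro sum_nonneg) auto
  have "F y - (\<Sum>n<M. F (pt x0 n) * psi x0 n y) = 0"
  proof (rule zero_by_eps[OF K0], intro allI impI)
    fix e :: real assume e: "e > 0"
    from F e obtain G where G: "G \<in> SS x0" and Gc: "\<forall>x\<in>{0..1}. \<bar>F x - G x\<bar> \<le> e"
      unfolding sup_closure_01_def by blast
    from G obtain N c where Gd: "G = (\<lambda>x. \<Sum>n<N. c n * psi x0 n x)" unfolding SS_def by blast
    define d where "d n = (if n < N then c n else 0)" for n
    have Gp: "G (pt x0 n) = d n" for n unfolding Gd d_def by (simp add: S_eval)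
    have "G y = (\<Sum>n<max N M. d n * psi x0 n y)" unfolding Gd d_def by (rule pad)
    also have "\<dots> = (\<Sum>n<M. d n * psi x0 n y)" by (rule sum_trunc) (use M in auto)
    finally have Gy: "G y = (\<Sum>n<M. G (pt x0 n) * psi x0 n y)" by (simp add: Gp)
    have "F y - (\<Sum>n<M. F (pt x0 n) * psi x0 n y)
        = (F y - G y) + (\<Sum>n<M. (G (pt x0 n) - F (pt x0 n)) * psi x0 n y)"
      by (simp add: Gy sum_subtractf algebra_simps)
    also have "\<bar>\<dots>\<bar> \<le> \<bar>F y - G y\<bar> + (\<Sum>n<M. \<bar>(G (pt x0 n) - F (pt x0 n)) * psi x0 n y\<bar>)"
      by (rule order_trans[OF abs_triangle_ineq]) (simp add: sum_abs)
    also have "\<dots> \<le> e + (\<Sum>n<M. e * \<bar>psi x0 n y\<bar>)"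
    proof (intro add_mono sum_mono)
      show "\<bar>F y - G y\<bar> \<le> e" using Gc y by blast
      fix n assume "n \<in> {..<M}"
      have "\<bar>G (pt x0 n) - F (pt x0 n)\<bar> \<le> e" using Gc pt_in[OF x0, of n] by (simp add: abs_minus_commute)
      then show "\<bar>(G (pt x0 n) - F (pt x0 n)) * psi x0 n y\<bar> \<le> e * \<bar>psi x0 n y\<bar>"
        by (simp add: abs_mult mult_right_mono)
    qed
    also have "\<dots> = e * (1 + K)" by (simp add: K_def sum_distrib_left algebra_simps)
    finally show "\<bar>F y - (\<Sum>n<M. F (pt x0 n) * psi x0 n y)\<bar> \<le> e * (1 + K)" .
  qed
  then show ?thesis by simp
qed

lemma closure_diff:
  assumes x0: "x0 \<in> {0..1}" and F: "F \<in> sup_closure_01 (SS x0)" and x: "x \<in> {0..1}" "x \<noteq> x0"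
  shows "F differentiable (at x within {0..1})"
proof -
  obtain M d where d: "d > 0" and Md: "\<forall>y. dist y x < d \<longrightarrow> (\<forall>n\<ge>M. psi x0 n y = 0)"
    using loc[OF x(2)] by blast
  define H where "H y = (\<Sum>n<M. F (pt x0 n) * psi x0 n y)" for y
  have "H differentiable (at x)" unfolding H_def
    by (auto intro!: differentiable_sum differentiable_mult psi_diff)
  then obtain D where D: "(H has_derivative D) (at x within {0..1})"
    using differentiable_at_withinI unfolding differentiable_def by blast
  have "(F has_derivative D) (at x within {0..1})"
  proof (rule has_derivative_transform_within[OF D d x(1)])
    fix y assume "y \<in> {0..1}" "dist y x < d"
    then show "H y = F y" unfolding H_def using closure_repr[OF x0 F, of y M] Md by auto
  qed
  then show ?thesis unfolding differentiable_def by blast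
qed

theorem mainTheorem12:
  fixes x0 :: real
  assumes "x0 \<in> {0..1}"
  shows "\<exists>S. S \<subseteq> C0_01 \<and> lin_subspace S \<and> inf_dim_01 S \<and>
    (\<forall>F\<in>sup_closure_01 S. kurzweil_primitive_01 F \<and>
       (\<forall>x\<in>{0..1} - {x0}. F differentiable (at x within {0..1})))"
proof (intro exI conjI)
  show "SS x0 \<subseteq> C0_01"
  proof
    fix G assume "G \<in> SS x0"
    then obtain N c where Gd: "G = (\<lambda>x. \<Sum>n<N. c n * psi x0 n x)" unfolding SS_def by blast
    have "\<And>x. (\<lambda>x. \<Sum>n<N. c n * psi x0 n x) differentiable (at x)"
      by (auto intro!: differentiable_sum differentiable_mult psi_diff)
    then show "G \<in> C0_01" unfolding C0_01_def Gd
      by (auto intro: differentiable_at_withinI)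
  qed
  show "lin_subspace (SS x0)"
    unfolding lin_subspace_def
  proof (intro conjI ballI allI)
    show "(\<lambda>x. 0) \<in> SS x0" unfolding SS_def by (rule CollectI, rule exI[of _ 0]) auto
  next
    fix F G assume "F \<in> SS x0" "G \<in> SS x0"
    then obtain N1 c1 N2 c2 where Fd: "F = (\<lambda>x. \<Sum>n<N1. c1 n * psi x0 n x)"
      and Gd: "G = (\<lambda>x. \<Sum>n<N2. c2 n * psi x0 n x)" unfolding SS_def by blast
    have "(\<lambda>x. F x + G x) = (\<lambda>x. \<Sum>n<max N1 N2. ((if n < N1 then c1 n else 0) + (if n < N2 then c2 n else 0)) * psi x0 n x)"
    proof
      fix x
      have "F x = (\<Sum>n<max N1 N2. (if n < N1 then c1 n else 0) * psi x0 n x)"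
        unfolding Fd using pad[where N=N1 and c=c1 and M=N2 and y=x] by simp
      moreover have "G x = (\<Sum>n<max N1 N2. (if n < N2 then c2 n else 0) * psi x0 n x)"
        unfolding Gd using pad[where N=N2 and c=c2 and M=N1 and y=x] by (simp add: max.commute)
      ultimately show "F x + G x = (\<Sum>n<max N1 N2. ((if n < N1 then c1 n else 0) + (if n < N2 then c2 n else 0)) * psi x0 n x)"
        by (simp add: sum.distrib distrib_right)
    qed
    then show "(\<lambda>x. F x + G x) \<in> SS x0" unfolding SS_def
      by (intro CollectI exI[of _ "max N1 N2"] exI[of _ "\<lambda>n. (if n < N1 then c1 n else 0) + (if n < N2 then c2 n else 0)"]) simp
  next
    fix k :: real and F assume "F \<in> SS x0"
    then obtain N c where Fd: "F = (\<lambda>x. \<Sum>n<N. c n * psi x0 n x)" unfolding SS_def by blast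
    have "(\<lambda>x. k * F x) = (\<lambda>x. \<Sum>n<N. (k * c n) * psi x0 n x)"
      unfolding Fd by (simp add: sum_distrib_left mult.assoc)
    then show "(\<lambda>x. k * F x) \<in> SS x0" unfolding SS_def
      by (intro CollectI exI[of _ N] exI[of _ "\<lambda>n. k * c n"]) simp
  qed
  show "inf_dim_01 (SS x0)"
    unfolding inf_dim_01_def
  proof (intro allI)
    fix n :: nat
    have A: "\<forall>i<n. psi x0 i \<in> SS x0"
    proof (intro allI impI)
      fix i assume "i < n"
      have "psi x0 i = (\<lambda>x. \<Sum>m<Suc i. (if m = i then 1 else 0) * psi x0 m x)"
        by (simp add: if_distrib[of "\<lambda>z. z * _"] cong: if_cong)
      then show "psi x0 i \<in> SS x0" unfolding SS_def
        by (intro CollectI exI[of _ "Suc i"] exI[of _ "\<lambda>m. if m = i then 1 else 0"]) simp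
    qed
    have B: "\<forall>i<n. c i = 0" if h: "\<forall>x\<in>{0..1}. (\<Sum>i<n. c i * psi x0 i x) = 0" for c
    proof (intro allI impI)
      fix i assume "i < n"
      have "(\<Sum>m<n. c m * psi x0 m (pt x0 i)) = 0" using h pt_in[OF assms] by blast
      then show "c i = 0" using \<open>i < n\<close> by (simp add: S_eval)
    qed
    show "\<exists>Fs::nat \<Rightarrow> real \<Rightarrow> real. (\<forall>i<n. Fs i \<in> SS x0) \<and>
     (\<forall>c::nat \<Rightarrow> real. (\<forall>x\<in>{0..1}. (\<Sum>i<n. c i * Fs i x) = 0) \<longrightarrow> (\<forall>i<n. c i = 0))"
      using A B by blast
  qed
  show "\<forall>F\<in>sup_closure_01 (SS x0). kurzweil_primitive_01 F \<and>
       (\<forall>x\<in>{0..1} - {x0}. F differentiable (at x within {0..1}))"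
  proof
  fix F assume F: "F \<in> sup_closure_01 (SS x0)"
  have diff: "\<forall>x\<in>{0..1} - {x0}. F differentiable (at x within {0..1})"
    using closure_diff[OF assms F] by blast
  have cont: "continuous_on {0..1} F" using F unfolding sup_closure_01_def by blast
  define f where "f y = vector_derivative F (at y)" for y
  have prim: "(f has_integral (F x - F 0)) {0..x}" if x: "x \<in> {0..1}" for x
  proof (rule fundamental_theorem_of_calculus_interior_strong[of "{x0}"])
    show "finite {x0}" by simp
    show "0 \<le> x" using x by simp
    show "continuous_on {0..x} F" using cont by (rule continuous_on_subset) (use x in auto)
    fix y assume y: "y \<in> {0<..<x} - {x0}"
    then have "F differentiable (at y within {0..1})" using diff x by auto
    moreover have "at y within {0..1} = at y" using y x by (intro at_within_Icc_at) auto
    ultimately have "F differentiable (at y)" by simp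
    then show "(F has_vector_derivative f y) (at y)"
      unfolding f_def using vector_derivative_works by blast
  qed
  have kp: "kurzweil_primitive_01 F"
    unfolding kurzweil_primitive_01_def
  proof (intro exI conjI ballI)
    show "f integrable_on {0..1}" using prim[of 1] by auto
    fix x :: real assume "x \<in> {0..1}" then show "(f has_integral (F x - F 0)) {0..x}" by (rule prim)
  qed
  show "kurzweil_primitive_01 F \<and> (\<forall>x\<in>{0..1} - {x0}. F differentiable (at x within {0..1}))" using kp diff by blast
qed
qed

end
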